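(* The attraction basin $\mathcal A$ of $x_0$ is invariant under the auxiliary flow: if $x\in\mathcal A$ and $(x,t)\in D_\Phi$ then $\Phi(x,t)\in\mathcal A$. The boundary $\partial\mathcal A$ of $\mathcal A$ relative to $D$ is also invariant in the same sense. Moreover, for every $x\in\partial\mathcal A$ the trajectory through $x$ is not global in the future.
   Context: Standing setting: $X,Y$ are real Banach spaces, $D\subseteq X$ is a nonempty open connected set, $f:D\to Y$ is a local homeomorphism (every point has an open neighbourhood mapped homeomorphically onto an open set), $x_0\in D$, $y_0=f(x_0)$. A flow in $D$ is a map $\Phi:D_\Phi\to D$ such that: (i) $D_\Phi$ is an open subset of $D\times\mathbb R$ and $\Phi$ is continuous; (ii) for each $x\in D$, $\{t:(x,t)\in D_\Phi\}$ is an interval containing $0$; (iii) $\Phi(x,0)=x$; (iv) if $(x,t_1),(x,t_1+t_2)\in D_\Phi$ then $(\Phi(x,t_1),t_2)\in D_\Phi$ and $\Phi(\Phi(x,t_1),t_2)=\Phi(x,t_1+t_2)$. The trajectory through $x$ is global in the future if $\{x\}\times[0,+\infty)\subseteq D_\Phi$. Let $\Psi(y,t)=y_0+e^{-t}(y-y_0)$ for $y\in Y,t\in\mathbb R$. The auxiliary flow $\Phi$ is the unique flow in $D$ of maximal domain with $f(\Phi(x,t))=\Psi(f(x),t)$ for all $(x,t)\in D_\Phi$; for each $x$, $t\mapsto\Phi(x,t)$ is the maximal continuous lifting by $f$ of $t\mapsto\Psi(f(x),t)$ through $x$ at $t=0$. The attraction basin $\mathcal A$ of $x_0$ is the set of $x\in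 D$ whose trajectory is global in the future and satisfies $\Phi(x,t)\to x_0$ as $t\to+\infty$. *)

theory Defs
  imports "HOL-Analysis.Analysis"
begin

definition local_homeo_on :: "'a::topological_space set \<Rightarrow> ('a \<Rightarrow> 'b::topological_space) \<Rightarrow> bool" where
  "local_homeo_on D f \<longleftrightarrow>
     (\<forall>x\<in>D. \<exists>U g. open U \<and> x \<in> U \<and> U \<subseteq> D \<and> open (f ` U) \<and> homeomorphism U (f ` U) f g)"

definition is_flow :: "'a::topological_space set \<Rightarrow> ('a \<times> real) set \<Rightarrow> ('a \<Rightarrow> real \<Rightarrow> 'a) \<Rightarrow> bool" where
  "is_flow D DPhi Phi \<longleftrightarrow>
     open DPhi \<and> DPhi \<subseteq> D \<times> UNIV \<and>
     continuous_on DPhi (\<lambda>(x, t). Phi x t) \<and>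
     (\<forall>p\<in>DPhi. Phi (fst p) (snd p) \<in> D) \<and>
     (\<forall>x\<in>D. is_interval {t. (x, t) \<in> DPhi} \<and> (x, 0) \<in> DPhi) \<and>
     (\<forall>x\<in>D. Phi x 0 = x) \<and>
     (\<forall>x t1 t2. (x, t1) \<in> DPhi \<longrightarrow> (x, t1 + t2) \<in> DPhi \<longrightarrow>
        (Phi x t1, t2) \<in> DPhi \<and> Phi (Phi x t1) t2 = Phi x (t1 + t2))"

definition Psi :: "'b::real_normed_vector \<Rightarrow> 'b \<Rightarrow> real \<Rightarrow> 'b" where
  "Psi y0 y t = y0 + exp (- t) *\<^sub>R (y - y0)"

definition lifts_Psi :: "('a \<Rightarrow> 'b::real_normed_vector) \<Rightarrow> 'b \<Rightarrow> ('a \<times> real) set \<Rightarrow> ('a \<Rightarrow> real \<Rightarrow> 'a) \<Rightarrow> bool" where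
  "lifts_Psi f y0 DPhi Phi \<longleftrightarrow> (\<forall>(x, t)\<in>DPhi. f (Phi x t) = Psi y0 (f x) t)"

definition auxiliary_flow ::
  "'a::topological_space set \<Rightarrow> ('a \<Rightarrow> 'b::real_normed_vector) \<Rightarrow> 'a \<Rightarrow> ('a \<times> real) set \<Rightarrow> ('a \<Rightarrow> real \<Rightarrow> 'a) \<Rightarrow> bool" where
  "auxiliary_flow D f x0 DPhi Phi \<longleftrightarrow>
     is_flow D DPhi Phi \<and> lifts_Psi f (f x0) DPhi Phi \<and>
     (\<forall>DPhi' Phi'. is_flow D DPhi' Phi' \<and> lifts_Psi f (f x0) DPhi' Phi' \<longrightarrow> DPhi' \<subseteq> DPhi)"

definition global_future :: "('a \<times> real) set \<Rightarrow> 'a \<Rightarrow> bool" where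
  "global_future DPhi x \<longleftrightarrow> (\<forall>t\<ge>0. (x, t) \<in> DPhi)"

definition attraction_basin ::
  "'a::topological_space set \<Rightarrow> ('a \<times> real) set \<Rightarrow> ('a \<Rightarrow> real \<Rightarrow> 'a) \<Rightarrow> 'a \<Rightarrow> 'a set" where
  "attraction_basin D DPhi Phi x0 =
     {x \<in> D. global_future DPhi x \<and> ((\<lambda>t. Phi x t) \<longlongrightarrow> x0) at_top}"

end

theory Submission
  imports Defs
begin


lemma Psi_0[simp]: "Psi y0 y 0 = y" by (simp add: Psi_def)
lemma Psi_Psi: "Psi y0 (Psi y0 y a) b = Psi y0 y (a + b)"
  by (simp add: Psi_def scaleR_scaleR exp_add[symmetric] add.commute)

lemma lift_unique:
  fixes f :: "'a::banach \<Rightarrow> 'b::banach" and I :: "real set"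
  assumes lh: "local_homeo_on D f" and I: "connected I"
    and c1: "continuous_on I g1" and c2: "continuous_on I g2"
    and s1: "g1 ` I \<subseteq> D" and s2: "g2 ` I \<subseteq> D"
    and fe: "\<And>t. t \<in> I \<Longrightarrow> f (g1 t) = f (g2 t)"
    and a: "a \<in> I" "g1 a = g2 a"
  shows "\<And>t. t \<in> I \<Longrightarrow> g1 t = g2 t"
proof -
  let ?S = "{t \<in> I. (\<lambda>t. g1 t - g2 t) t = 0}"
  have cl: "closedin (top_of_set I) ?S"
    by (rule continuous_closedin_preimage_constant) (intro continuous_intros c1 c2)
  have op: "openin (top_of_set I) ?S"
    unfolding openin_subopen[of _ ?S]
  proof
    fix t assume t: "t \<in> ?S"
    then have "g1 t \<in> D" using s1 by auto
    then obtain U h where U: "open U" "g1 t \<in> U" "U \<subseteq> D" "homeomorphism U (f ` U) f h"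
      using lh unfolding local_homeo_on_def by blast
    have inj: "\<And>x y. x \<in> U \<Longrightarrow> y \<in> U \<Longrightarrow> f x = f y \<Longrightarrow> x = y"
      using U(4) unfolding homeomorphism_def by metis
    let ?T = "(I \<inter> g1 -` U) \<inter> (I \<inter> g2 -` U)"
    have "openin (top_of_set I) ?T"
      by (intro openin_Int continuous_openin_preimage_gen c1 c2 U(1))
    moreover have "t \<in> ?T" using t U(2) by auto
    moreover have "?T \<subseteq> ?S" using inj fe by auto
    ultimately show "\<exists>T. openin (top_of_set I) T \<and> t \<in> T \<and> T \<subseteq> ?S" by blast
  qed
  have "?S = I"
    using I op cl a unfolding connected_clopen by auto
  then show "\<And>t. t \<in> I \<Longrightarrow> g1 t = g2 t" by auto
qed



locale setting =
  fixes D :: "'a::banach set" and f :: "'a \<Rightarrow> 'b::banach" and x0 :: 'a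
    and DPhi :: "('a \<times> real) set" and Phi :: "'a \<Rightarrow> real \<Rightarrow> 'a"
  assumes lh: "local_homeo_on D f" and flow: "is_flow D DPhi Phi"
    and lift: "lifts_Psi f (f x0) DPhi Phi" and x0D: "x0 \<in> D"
begin

lemma openDPhi: "open DPhi" using flow by (simp add: is_flow_def)
lemma DPhi_D: "(x, t) \<in> DPhi \<Longrightarrow> x \<in> D" using flow by (auto simp: is_flow_def)
lemma Phi_D: "(x, t) \<in> DPhi \<Longrightarrow> Phi x t \<in> D" using flow by (force simp: is_flow_def)
lemma zero_in: "x \<in> D \<Longrightarrow> (x, 0) \<in> DPhi" using flow by (simp add: is_flow_def)
lemma Phi0: "x \<in> D \<Longrightarrow> Phi x 0 = x" using flow by (simp add: is_flow_def)
lemma interval: "(x, a) \<in> DPhi \<Longrightarrow> (x, b) \<in> DPhi \<Longrightarrow> a \<le> c \<Longrightarrow> c \<le> b \<Longrightarrow> (x, c) \<in> DPhi"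
proof -
  assume "(x, a) \<in> DPhi" "(x, b) \<in> DPhi" "a \<le> c" "c \<le> b"
  moreover have "is_interval {t. (x, t) \<in> DPhi}"
    using flow DPhi_D[OF \<open>(x, a) \<in> DPhi\<close>] by (simp add: is_flow_def)
  ultimately show ?thesis unfolding is_interval_1 by blast
qed
lemma group: "(x, t1) \<in> DPhi \<Longrightarrow> (x, t1 + t2) \<in> DPhi \<Longrightarrow>
   (Phi x t1, t2) \<in> DPhi \<and> Phi (Phi x t1) t2 = Phi x (t1 + t2)"
  using flow unfolding is_flow_def by blast
lemma liftP: "(x, t) \<in> DPhi \<Longrightarrow> f (Phi x t) = Psi (f x0) (f x) t"
  using lift unfolding lifts_Psi_def by auto
lemma contF: "continuous_on DPhi (\<lambda>(x, t). Phi x t)" using flow by (simp add: is_flow_def)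

lemma reverse: assumes "(x, t) \<in> DPhi"
  shows "(Phi x t, -t) \<in> DPhi \<and> Phi (Phi x t) (-t) = x"
proof -
  have "(x, t + (-t)) \<in> DPhi" using zero_in[OF DPhi_D[OF assms]] by simp
  from group[OF assms this] show ?thesis using Phi0[OF DPhi_D[OF assms]] by simp
qed

lemma concat: assumes "(x, t1) \<in> DPhi" "(Phi x t1, t2) \<in> DPhi"
  shows "(x, t1 + t2) \<in> DPhi \<and> Phi x (t1 + t2) = Phi (Phi x t1) t2"
proof -
  have r: "(Phi x t1, -t1) \<in> DPhi" "Phi (Phi x t1) (-t1) = x" using reverse[OF assms(1)] by auto
  have "(Phi x t1, -t1 + (t1 + t2)) \<in> DPhi" using assms(2) by simp
  from group[OF r(1) this] r(2) show ?thesis by simp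
qed

lemma cont_t: assumes "\<And>t. t \<in> S \<Longrightarrow> (x, t) \<in> DPhi" shows "continuous_on S (\<lambda>t. Phi x t)"
proof -
  have "continuous_on S (\<lambda>t. (x, t))" by (intro continuous_intros)
  moreover have "(\<lambda>t. (x, t)) ` S \<subseteq> DPhi" using assms by auto
  ultimately show ?thesis using continuous_on_compose2[OF contF, of S "\<lambda>t. (x, t)"] by simp
qed

lemma cont_x: assumes "\<And>z. z \<in> S \<Longrightarrow> (z, t) \<in> DPhi" shows "continuous_on S (\<lambda>z. Phi z t)"
proof -
  have "continuous_on S (\<lambda>z. (z, t))" by (intro continuous_intros)
  moreover have "(\<lambda>z. (z, t)) ` S \<subseteq> DPhi" using assms by auto
  ultimately show ?thesis using continuous_on_compose2[OF contF, of S "\<lambda>z. (z, t)"] by simp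
qed

lemma fcont: "continuous_on D f"
proof -
  have "\<forall>x\<in>D. isCont f x"
  proof
    fix x assume "x \<in> D"
    then obtain U h where U: "open U" "x \<in> U" "U \<subseteq> D" "homeomorphism U (f ` U) f h"
      using lh unfolding local_homeo_on_def by blast
    then have "continuous_on U f" unfolding homeomorphism_def by blast
    then show "isCont f x" using U continuous_on_eq_continuous_at by blast
  qed
  then show ?thesis by (simp add: continuous_at_imp_continuous_on)
qed

lemma extend:
  assumes xD: "x \<in> D" and s: "s \<ge> 0" and cg: "continuous_on {0..s} g"
    and gD: "g ` {0..s} \<subseteq> D" and g0: "g 0 = x"
    and gf: "\<And>\<sigma>. \<sigma> \<in> {0..s} \<Longrightarrow> f (g \<sigma>) = Psi (f x0) (f x) \<sigma>"
  shows "(x, s) \<in> DPhi"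
proof -
  define T where "T = {\<sigma> \<in> {0..s}. (x, \<sigma>) \<in> DPhi}"
  have T0: "0 \<in> T" using zero_in[OF xD] s by (simp add: T_def)
  have bdd: "bdd_above T" by (auto simp: T_def bdd_above_def)
  define m where "m = Sup T"
  have m0: "0 \<le> m" using cSup_upper[OF T0 bdd] by (simp add: m_def)
  have ms: "m \<le> s" unfolding m_def using T0 by (intro cSup_least) (auto simp: T_def)
  have h1: "(x, \<sigma>) \<in> DPhi" if "0 \<le> \<sigma>" "\<sigma> < m" for \<sigma>
  proof -
    have "\<sigma> < Sup T" using that by (simp add: m_def)
    then obtain \<tau> where "\<tau> \<in> T" "\<sigma> < \<tau>" using less_cSupE T0 by blast
    then show ?thesis using interval[OF zero_in[OF xD], of \<tau> \<sigma>] that by (auto simp: T_def)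
  qed
  have h2: "Phi x \<sigma> = g \<sigma>" if "0 \<le> \<sigma>" "\<sigma> < m" for \<sigma>
  proof -
    have inD: "\<And>t. t \<in> {0..\<sigma>} \<Longrightarrow> (x, t) \<in> DPhi" using h1 that by auto
    show ?thesis
    proof (rule lift_unique[OF lh, of "{0..\<sigma>}" "\<lambda>t. Phi x t" g 0])
      show "continuous_on {0..\<sigma>} (\<lambda>t. Phi x t)" using cont_t inD by blast
      show "continuous_on {0..\<sigma>} g" using that ms by (intro continuous_on_subset[OF cg]) auto
      show "(\<lambda>t. Phi x t) ` {0..\<sigma>} \<subseteq> D" using inD Phi_D by blast
      show "g ` {0..\<sigma>} \<subseteq> D" using gD that ms by auto
      show "f (Phi x t) = f (g t)" if "t \<in> {0..\<sigma>}" for t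
        using liftP[OF inD[OF that]] gf[of t] that \<open>\<sigma> < m\<close> ms by auto
    qed (use that g0 Phi0[OF xD] in auto)
  qed
  have h3: "(x, m) \<in> DPhi"
  proof (cases "m = 0")
    case True then show ?thesis using zero_in[OF xD] by simp
  next
    case False
    then have mpos: "m > 0" using m0 by simp
    define p where "p = g m"
    have pD: "p \<in> D" using gD m0 ms by (auto simp: p_def)
    obtain e where e: "e > 0" "ball (p, 0) e \<subseteq> DPhi"
      using openDPhi zero_in[OF pD] open_contains_ball by blast
    define \<delta> where "\<delta> = min e m / 2"
    have \<delta>: "\<delta> > 0" "\<delta> < e" "\<delta> < m" using e mpos by (auto simp: \<delta>_def)
    have pin: "(p, \<tau>) \<in> DPhi" if "\<bar>\<tau>\<bar> \<le> \<delta>" for \<tau>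
    proof -
      have "dist (p, \<tau>) (p, 0) < e" using that \<delta> by (simp add: dist_Pair_Pair)
      then show ?thesis using e by (auto simp: dist_commute)
    qed
    have eq: "Phi p \<tau> = g (m + \<tau>)" if "\<tau> \<in> {-\<delta>..0}" for \<tau>
    proof (rule lift_unique[OF lh, of "{-\<delta>..0}" "\<lambda>t. Phi p t" "\<lambda>t. g (m + t)" 0])
      show "continuous_on {-\<delta>..0} (\<lambda>t. Phi p t)" by (rule cont_t) (auto intro: pin)
      show "continuous_on {-\<delta>..0} (\<lambda>t. g (m + t))"
        by (rule continuous_on_compose2[OF cg]) (use \<delta> ms in \<open>auto intro!: continuous_intros\<close>)
      show "(\<lambda>t. Phi p t) ` {-\<delta>..0} \<subseteq> D" using pin Phi_D by auto
      show "(\<lambda>t. g (m + t)) ` {-\<delta>..0} \<subseteq> D" using gD \<delta> ms by auto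
      show "f (Phi p t) = f (g (m + t))" if "t \<in> {-\<delta>..0}" for t
      proof -
        have "f (Phi p t) = Psi (f x0) (f p) t" using liftP pin that by auto
        also have "f p = Psi (f x0) (f x) m" using gf m0 ms by (simp add: p_def)
        also have "Psi (f x0) (Psi (f x0) (f x) m) t = f (g (m + t))"
          using gf[of "m + t"] that \<delta> ms by (simp add: Psi_Psi)
        finally show ?thesis .
      qed
    qed (use that \<delta> Phi0[OF pD] p_def in auto)
    have A: "Phi p (-\<delta>) = Phi x (m - \<delta>)"
      using eq[of "-\<delta>"] h2[of "m - \<delta>"] \<delta> by auto
    have "(Phi p (-\<delta>), 2 * \<delta>) \<in> DPhi"
      using group[of p "-\<delta>" "2 * \<delta>"] pin[of "-\<delta>"] pin[of "\<delta>"] \<delta> by auto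
    then have "(Phi x (m - \<delta>), 2 * \<delta>) \<in> DPhi" using A by simp
    from concat[OF h1[of "m - \<delta>"] this] \<delta>
    have "(x, m + \<delta>) \<in> DPhi" by (auto simp: add.commute)
    then show ?thesis using interval[OF zero_in[OF xD], of "m + \<delta>" m] m0 \<delta> by auto
  qed
  have "m = s"
  proof (rule ccontr)
    assume "m \<noteq> s"
    then have "m < s" using ms by simp
    obtain e where e: "e > 0" "ball (x, m) e \<subseteq> DPhi"
      using openDPhi h3 open_contains_ball by blast
    define c where "c = min e (s - m)"
    have mm: "c \<le> s - m" "c > 0" "c \<le> e" using e \<open>m < s\<close> by (auto simp: c_def)
    define \<sigma> where "\<sigma> = m + c / 2"
    have "dist (x, \<sigma>) (x, m) < e" using mm by (simp add: dist_Pair_Pair \<sigma>_def dist_real_def)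
    then have "(x, \<sigma>) \<in> DPhi" using e by (auto simp: dist_commute)
    moreover have "0 \<le> \<sigma>" using m0 mm unfolding \<sigma>_def by linarith
    moreover have "\<sigma> \<le> s" using m0 mm unfolding \<sigma>_def by linarith
    ultimately have "\<sigma> \<in> T" by (auto simp: T_def)
    then have "\<sigma> \<le> m" using cSup_upper[OF _ bdd] by (simp add: m_def)
    then show False using mm unfolding \<sigma>_def by linarith
  qed
  then show ?thesis using h3 by simp
qed

end


lemma Psi_lim: "((\<lambda>s. Psi y0 y s) \<longlongrightarrow> y0) at_top"
proof -
  have "((\<lambda>s::real. exp (- s)) \<longlongrightarrow> (0::real)) at_top"
    using filterlim_compose[OF exp_at_bot filterlim_uminus_at_bot_at_top] by simp
  then have "((\<lambda>s. y0 + exp (- s) *\<^sub>R (y - y0)) \<longlongrightarrow> y0 + 0 *\<^sub>R (y - y0)) at_top"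
    by (intro tendsto_intros)
  then show ?thesis by (simp add: Psi_def)
qed

lemma Psi_dist: "s \<ge> 0 \<Longrightarrow> dist (Psi y0 y s) y0 \<le> dist y y0"
  by (simp add: Psi_def dist_norm mult_left_le_one_le)

lemma Psi_cont: "continuous_on S (\<lambda>s. Psi y0 y s)"
  unfolding Psi_def by (intro continuous_intros)

context setting
begin

abbreviation "A \<equiv> attraction_basin D DPhi Phi x0"

lemma inv: assumes x: "x \<in> A" and xt: "(x, t) \<in> DPhi" shows "Phi x t \<in> A"
proof -
  have xD: "x \<in> D" and gl: "\<And>s. s \<ge> 0 \<Longrightarrow> (x, s) \<in> DPhi"
    and lim: "((\<lambda>s. Phi x s) \<longlongrightarrow> x0) at_top"
    using x by (auto simp: attraction_basin_def global_future_def)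
  have xts: "(x, t + s) \<in> DPhi" if "s \<ge> 0" for s
  proof (cases "t + s \<ge> 0")
    case True then show ?thesis using gl by blast
  next
    case False
    then show ?thesis using interval[OF xt zero_in[OF xD], of "t + s"] that by auto
  qed
  have g: "(Phi x t, s) \<in> DPhi \<and> Phi (Phi x t) s = Phi x (t + s)" if "s \<ge> 0" for s
    using group[OF xt xts[OF that]] .
  have "((\<lambda>s. Phi x (t + s)) \<longlongrightarrow> x0) at_top"
    using filterlim_compose[OF lim filterlim_tendsto_add_at_top[OF tendsto_const filterlim_ident]] by simp
  moreover have "eventually (\<lambda>s. Phi x (t + s) = Phi (Phi x t) s) at_top"
    using eventually_ge_at_top[of 0] by eventually_elim (use g in auto)
  ultimately have "((\<lambda>s. Phi (Phi x t) s) \<longlongrightarrow> x0) at_top" by (rule Lim_transform_eventually)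
  then show ?thesis using g Phi_D[OF xt]
    by (auto simp: attraction_basin_def global_future_def)
qed

lemma inv_back: assumes "(x, t) \<in> DPhi" "Phi x t \<in> A" shows "x \<in> A"
  using inv[OF assms(2) conjunct1[OF reverse[OF assms(1)]]] reverse[OF assms(1)] by simp

lemma A_D: "A \<subseteq> D" by (auto simp: attraction_basin_def)

end


context setting
begin

lemma main:
  shows "open A"
    and "\<And>x t. x \<in> D \<inter> frontier A \<Longrightarrow> (x, t) \<in> DPhi \<Longrightarrow> Phi x t \<in> D \<inter> frontier A"
    and "\<And>x. x \<in> D \<inter> frontier A \<Longrightarrow> \<not> global_future DPhi x"
proof -
  obtain U0 g where U0: "open U0" "x0 \<in> U0" "U0 \<subseteq> D" "open (f ` U0)"
      and hom: "homeomorphism U0 (f ` U0) f g"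
    using lh x0D unfolding local_homeo_on_def by blast
  have gf: "\<And>z. z \<in> U0 \<Longrightarrow> g (f z) = z" and fg: "\<And>y. y \<in> f ` U0 \<Longrightarrow> f (g y) = y"
    and gU: "\<And>y. y \<in> f ` U0 \<Longrightarrow> g y \<in> U0"
    and cf: "continuous_on U0 f" and cg: "continuous_on (f ` U0) g"
    using hom unfolding homeomorphism_def by auto
  obtain r where r: "r > 0" "ball (f x0) r \<subseteq> f ` U0"
    using U0(2,4) open_contains_ball by blast
  define W where "W = U0 \<inter> f -` ball (f x0) r"
  have Wopen: "open W" unfolding W_def by (rule continuous_open_preimage[OF cf U0(1)]) simp
  have x0W: "x0 \<in> W" using U0 r by (simp add: W_def)
  have Psi_ball: "Psi (f x0) y s \<in> ball (f x0) r" if "y \<in> ball (f x0) r" "s \<ge> 0" for y s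
    using Psi_dist[OF that(2), of "f x0" y] that(1) by (simp add: dist_commute)
  have gcont: "continuous_on S (\<lambda>s. g (Psi (f x0) y s))"
    if "\<And>s. s \<in> S \<Longrightarrow> Psi (f x0) y s \<in> ball (f x0) r" for S y
    by (rule continuous_on_compose2[OF cg Psi_cont]) (use that r in auto)
  have WA: "W \<subseteq> A"
  proof
    fix q assume q: "q \<in> W"
    have qU: "q \<in> U0" and fq: "f q \<in> ball (f x0) r" using q by (auto simp: W_def)
    have qD: "q \<in> D" using qU U0 by auto
    let ?g = "\<lambda>s. g (Psi (f x0) (f q) s)"
    have PB: "\<And>s. s \<in> {0..} \<Longrightarrow> Psi (f x0) (f q) s \<in> ball (f x0) r" using Psi_ball fq by auto
    have glob: "(q, s) \<in> DPhi \<and> Phi q s = ?g s" if s: "s \<ge> 0" for s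
    proof -
      have PBs: "\<And>t. t \<in> {0..s} \<Longrightarrow> Psi (f x0) (f q) t \<in> ball (f x0) r" using PB by auto
      have cs: "continuous_on {0..s} ?g" by (rule gcont) (use PBs in auto)
      have gs: "?g ` {0..s} \<subseteq> D" using PBs r gU U0 by blast
      have ff: "\<And>t. t \<in> {0..s} \<Longrightarrow> f (?g t) = Psi (f x0) (f q) t" using PBs r fg by blast
      have in1: "(q, s) \<in> DPhi"
        by (rule extend[OF qD s cs gs]) (use gf qU ff in auto)
      have inD: "\<And>t. t \<in> {0..s} \<Longrightarrow> (q, t) \<in> DPhi"
        using interval[OF zero_in[OF qD] in1] by auto
      have "Phi q s = ?g s"
      proof (rule lift_unique[OF lh, of "{0..s}" "\<lambda>t. Phi q t" ?g 0])
        show "continuous_on {0..s} (\<lambda>t. Phi q t)" using cont_t inD by blast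
        show "(\<lambda>t. Phi q t) ` {0..s} \<subseteq> D" using inD Phi_D by blast
        show "f (Phi q t) = f (?g t)" if "t \<in> {0..s}" for t using liftP[OF inD[OF that]] ff[OF that] by simp
      qed (use s cs gs Phi0[OF qD] gf[OF qU] in auto)
      then show ?thesis using in1 by simp
    qed
    have "isCont g (f x0)" using cg U0 continuous_on_eq_continuous_at by blast
    then have "((\<lambda>s. ?g s) \<longlongrightarrow> g (f x0)) at_top"
      using isCont_tendsto_compose Psi_lim by blast
    then have "((\<lambda>s. ?g s) \<longlongrightarrow> x0) at_top" using gf U0 by simp
    moreover have "eventually (\<lambda>s. ?g s = Phi q s) at_top"
      using eventually_ge_at_top[of 0] by eventually_elim (use glob in auto)
    ultimately have "((\<lambda>s. Phi q s) \<longlongrightarrow> x0) at_top" by (rule Lim_transform_eventually)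
    then show "q \<in> A" using glob qD by (auto simp: attraction_basin_def global_future_def)
  qed
  show Aopen: "open A"
    unfolding open_subopen[of A]
  proof
    fix z assume z: "z \<in> A"
    then have "((\<lambda>t. Phi z t) \<longlongrightarrow> x0) at_top" by (simp add: attraction_basin_def)
    then have "eventually (\<lambda>t. Phi z t \<in> W) at_top" using topological_tendstoD Wopen x0W by blast
    then have "eventually (\<lambda>t. 0 \<le> t \<and> Phi z t \<in> W) at_top"
      using eventually_ge_at_top[of 0] by eventually_elim auto
    then obtain T where T: "0 \<le> T" "Phi z T \<in> W" by (auto simp: eventually_at_top_linorder)
    have zT: "(z, T) \<in> DPhi" using z T by (auto simp: attraction_basin_def global_future_def)
    define S where "S = {z'. (z', T) \<in> DPhi}"
    have Sopen: "open S" unfolding S_def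
      using open_vimage[OF openDPhi continuous_on_Pair[OF continuous_on_id continuous_on_const[of UNIV T]]] by (simp add: vimage_def)
    define Oo where "Oo = S \<inter> (\<lambda>z'. Phi z' T) -` W"
    have "open Oo" unfolding Oo_def
      by (rule continuous_open_preimage[OF cont_x Sopen Wopen]) (auto simp: S_def)
    moreover have "z \<in> Oo" using zT T by (auto simp: Oo_def S_def)
    moreover have "Oo \<subseteq> A"
    proof
      fix z' assume "z' \<in> Oo"
      then have "(z', T) \<in> DPhi" "Phi z' T \<in> A" using WA by (auto simp: Oo_def S_def)
      then show "z' \<in> A" by (rule inv_back)
    qed
    ultimately show "\<exists>T. open T \<and> z \<in> T \<and> T \<subseteq> A" by blast
  qed
  have fr: "frontier A = closure A - A" using Aopen by (simp add: frontier_def interior_open)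
  show part2: "Phi x t \<in> D \<inter> frontier A" if x: "x \<in> D \<inter> frontier A" and xt: "(x, t) \<in> DPhi" for x t
  proof -
    have xc: "x \<in> closure A" and xA: "x \<notin> A" using x fr by auto
    have "Phi x t \<notin> A" using inv_back[OF xt] xA by blast
    moreover have "Phi x t \<in> closure A"
      unfolding closure_iff_nhds_not_empty
    proof (intro allI impI)
      fix V S assume VS: "S \<subseteq> V" "open S" "Phi x t \<in> S"
      define S1 where "S1 = {z'. (z', t) \<in> DPhi}"
      have S1open: "open S1" unfolding S1_def
        using open_vimage[OF openDPhi continuous_on_Pair[OF continuous_on_id continuous_on_const[of UNIV t]]] by (simp add: vimage_def)
      define Oo where "Oo = S1 \<inter> (\<lambda>z'. Phi z' t) -` S"
      have "open Oo" unfolding Oo_def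
        by (rule continuous_open_preimage[OF cont_x S1open VS(2)]) (auto simp: S1_def)
      moreover have "x \<in> Oo" using xt VS by (auto simp: Oo_def S1_def)
      ultimately obtain a where a: "a \<in> A" "a \<in> Oo"
        using xc unfolding closure_iff_nhds_not_empty by blast
      then have "Phi a t \<in> A" "Phi a t \<in> V" using inv[of a t] VS by (auto simp: Oo_def S1_def)
      then show "A \<inter> V \<noteq> {}" by blast
    qed
    ultimately show ?thesis using Phi_D[OF xt] fr by auto
  qed
  show "\<not> global_future DPhi x" if x: "x \<in> D \<inter> frontier A" for x
  proof
    assume gl: "global_future DPhi x"
    have xD: "x \<in> D" using x by simp
    have "eventually (\<lambda>t. Psi (f x0) (f x) t \<in> ball (f x0) r) at_top"
      using topological_tendstoD[OF Psi_lim, of "ball (f x0) r" "f x0" "f x"] r by simp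
    then have "eventually (\<lambda>t. 0 \<le> t \<and> Psi (f x0) (f x) t \<in> ball (f x0) r) at_top"
      using eventually_ge_at_top[of 0] by eventually_elim auto
    then obtain T where T: "0 \<le> T" "Psi (f x0) (f x) T \<in> ball (f x0) r"
      by (auto simp: eventually_at_top_linorder)
    have xT: "(x, T) \<in> DPhi" using gl T by (simp add: global_future_def)
    define p where "p = Phi x T"
    have pfr: "p \<in> D \<inter> frontier A" using part2[OF x xT] by (simp add: p_def)
    have pc: "p \<in> closure A" and pA: "p \<notin> A" and pD: "p \<in> D" using pfr fr by auto
    have fp: "f p \<in> ball (f x0) r" using liftP[OF xT] T by (simp add: p_def)
    have fixpt: "a = g (f a)" if a: "a \<in> A" "f a \<in> ball (f x0) r" for a
    proof -
      have aD: "a \<in> D" using a A_D by auto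
      have gla: "\<And>s. s \<ge> 0 \<Longrightarrow> (a, s) \<in> DPhi" and lim: "((\<lambda>t. Phi a t) \<longlongrightarrow> x0) at_top"
        using a by (auto simp: attraction_basin_def global_future_def)
      have "eventually (\<lambda>t. Phi a t \<in> W) at_top" using topological_tendstoD[OF lim] Wopen x0W by blast
      then have "eventually (\<lambda>t. 0 \<le> t \<and> Phi a t \<in> W) at_top"
        using eventually_ge_at_top[of 0] by eventually_elim auto
      then obtain S where S: "0 \<le> S" "Phi a S \<in> W" by (auto simp: eventually_at_top_linorder)
      let ?g = "\<lambda>s. g (Psi (f x0) (f a) s)"
      have PBs: "\<And>t. t \<in> {0..S} \<Longrightarrow> Psi (f x0) (f a) t \<in> ball (f x0) r" using Psi_ball a by auto
      have cs: "continuous_on {0..S} ?g" by (rule gcont) (use PBs in auto)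
      have gs: "?g ` {0..S} \<subseteq> D" using PBs r gU U0 by blast
      have ff: "\<And>t. t \<in> {0..S} \<Longrightarrow> f (?g t) = Psi (f x0) (f a) t" using PBs r fg by blast
      have inD: "\<And>t. t \<in> {0..S} \<Longrightarrow> (a, t) \<in> DPhi" using gla by auto
      have "Phi a 0 = ?g 0"
      proof (rule lift_unique[OF lh, of "{0..S}" "\<lambda>t. Phi a t" ?g S])
        show "continuous_on {0..S} (\<lambda>t. Phi a t)" using cont_t inD by blast
        show "(\<lambda>t. Phi a t) ` {0..S} \<subseteq> D" using inD Phi_D by blast
        show "f (Phi a t) = f (?g t)" if "t \<in> {0..S}" for t using liftP[OF inD[OF that]] ff[OF that] by simp
        have "Phi a S \<in> U0" using S by (simp add: W_def)
        then have "Phi a S = g (f (Phi a S))" using gf by simp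
        then show "Phi a S = ?g S" using liftP[OF inD[of S]] S by simp
      qed (use S cs gs in auto)
      then show ?thesis using Phi0[OF aD] by simp
    qed
    have Dopen: "open D" unfolding open_subopen[of D]
    proof
      fix z assume "z \<in> D"
      then show "\<exists>T. open T \<and> z \<in> T \<and> T \<subseteq> D" using lh unfolding local_homeo_on_def by blast
    qed
    define Oo where "Oo = D \<inter> f -` ball (f x0) r"
    have Oopen: "open Oo" unfolding Oo_def
      by (rule continuous_open_preimage[OF fcont]) (use Dopen in auto)
    have hcont: "continuous_on Oo (\<lambda>z. g (f z))"
      by (rule continuous_on_compose2[OF cg continuous_on_subset[OF fcont]]) (use r in \<open>auto simp: Oo_def\<close>)
    have pO: "p \<in> Oo" using pD fp by (simp add: Oo_def)
    have peq: "p = g (f p)"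
    proof (rule ccontr)
      assume "p \<noteq> g (f p)"
      then obtain V1 V2 where V: "open V1" "open V2" "p \<in> V1" "g (f p) \<in> V2" "V1 \<inter> V2 = {}"
        using hausdorff[of p "g (f p)"] by metis
      define N where "N = (Oo \<inter> V1) \<inter> (\<lambda>z. g (f z)) -` V2"
      have "open N" unfolding N_def
        using continuous_open_preimage[OF continuous_on_subset[OF hcont Int_lower1] open_Int[OF Oopen V(1)] V(2)] .
      moreover have "p \<in> N" using pO V by (simp add: N_def)
      ultimately have "attraction_basin D DPhi Phi x0 \<inter> N \<noteq> {}"
        using pc[unfolded closure_iff_nhds_not_empty, rule_format, of N N] by simp
      then obtain a where a: "a \<in> A" "a \<in> N" by auto
      have aO: "a \<in> Oo" and aV1: "a \<in> V1" and aV2: "g (f a) \<in> V2" using a(2) by (simp_all add: N_def)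
      have "f a \<in> ball (f x0) r" using aO by (simp add: Oo_def)
      then have eq: "g (f a) = a" using fixpt[OF a(1)] by metis
      have "a \<in> V2" using aV2 unfolding eq .
      then show False using aV1 V(5) by blast
    qed
    have "f p \<in> f ` U0" using r fp by blast
    then have "p \<in> U0" using peq gU by metis
    then have "p \<in> W" using fp by (simp add: W_def)
    then show False using WA pA by blast
  qed
qed

end

theorem lemma2p2:
  fixes D :: "'a::banach set" and f :: "'a \<Rightarrow> 'b::banach" and x0 :: 'a
    and DPhi :: "('a \<times> real) set" and Phi :: "'a \<Rightarrow> real \<Rightarrow> 'a"
  assumes "open D" "connected D" "D \<noteq> {}"
    and "local_homeo_on D f"
    and "x0 \<in> D"
    and "auxiliary_flow D f x0 DPhi Phi"
  shows "(\<forall>x t. x \<in> attraction_basin D DPhi Phi x0 \<and> (x, t) \<in> DPhi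
            \<longrightarrow> Phi x t \<in> attraction_basin D DPhi Phi x0)
       \<and> (\<forall>x t. x \<in> D \<inter> frontier (attraction_basin D DPhi Phi x0) \<and> (x, t) \<in> DPhi
            \<longrightarrow> Phi x t \<in> D \<inter> frontier (attraction_basin D DPhi Phi x0))
       \<and> (\<forall>x \<in> D \<inter> frontier (attraction_basin D DPhi Phi x0). \<not> global_future DPhi x)"
proof -
  interpret setting D f x0 DPhi Phi
    using assms by unfold_locales (auto simp: auxiliary_flow_def)
  show ?thesis using inv main(2) main(3) by blast
qed

end
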